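(* Let $X$ be a set and $\lambda\in\mathbf{k}$, and let $j_X:X\to\mathrm{DD}(\Delta X)$ send $x$ to the tree $|\vee_{x^{(0)}}|$. Then $(\mathrm{DD}(\Delta X),\prec,\succ,d_X)$ together with $j_X$ is the free differential dendriform algebra of weight $\lambda$ on $X$: it is a differential dendriform algebra of weight $\lambda$, and for every differential dendriform algebra $(D,\prec_D,\succ_D,d_D)$ of weight $\lambda$ and every map of sets $f:X\to D$, there is a unique linear map $\bar f:\mathrm{DD}(\Delta X)\to D$ preserving $\prec$ and $\succ$, satisfying $d_D\bar f=\bar f d_X$ and $\bar f j_X=f$.
   Context: $\mathbf{k}$ is a commutative unital ring. Let $\Delta X:=X\times\mathbb N=\{x^{(n)}\mid x\in X,n\ge0\}$. Consider planar binary trees whose internal vertices are decorated by elements of $\Delta X$; $|$ denotes the tree with one leaf and no internal vertex. Every such tree $\tau\ne|$ is uniquely $\tau=\tau^l\vee_{y}\tau^r$, obtained by joining the roots of the trees $\tau^l,\tau^r$ to a new root vertex decorated by $y\in\Delta X$. Let $\mathrm{DD}(\Delta X)$ be the free $\mathbf{k}$-module on all such trees other than $|$. Define bilinear $\prec,\succ$ recursively on total depth: for $\tau\ne|$, $|\succ\tau:=\tau\prec|:=\tau$ and $|\prec\tau:=\tau\succ|:=0$; for $\tau=\tau^l\vee_{x}\tau^r$ and $\sigma=\sigma^l\vee_{y}\sigma^r$: $\tau\prec\sigma:=\tau^l\vee_x(\tau^r\prec\sigma+\tau^r\succ\sigma)$ and $\tau\succ\sigma:=(\tau\prec\sigma^l+\tau\succ\sigma^l)\vee_y\sigma^r$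 (grafting extended bilinearly). Define $d_X$ linearly by: if the internal vertices of $\tau$ are decorated by $x_1^{(r_1)},\dots,x_N^{(r_N)}$, then $d_X(\tau)=\sum_{\emptyset\ne S\subseteq\{1,\dots,N\}}\lambda^{|S|-1}\tau_S$, where $\tau_S$ is the tree of the same shape with each decoration $x_i^{(r_i)}$, $i\in S$, replaced by $x_i^{(r_i+1)}$. A dendriform algebra is a $\mathbf{k}$-module $D$ with bilinear operations $\prec,\succ$ such that for all $a,b,c\in D$: $(a\prec b)\prec c=a\prec(b\prec c+b\succ c)$, $(a\succ b)\prec c=a\succ(b\prec c)$, $(a\prec b+a\succ b)\succ c=a\succ(b\succ c)$. A derivation of weight $\lambda$ on it is a linear map $d$ with $d(a\prec b)=d(a)\prec b+a\prec d(b)+\lambda d(a)\prec d(b)$ and $d(a\succ b)=d(a)\succ b+a\succ d(b)+\lambda d(a)\succ d(b)$ for all $a,b$; then $(D,\prec,\succ,d)$ is a differential dendriform algebra of weight $\lambda$. *)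

theory Defs
  imports Main HOL.Modules "HOL-Library.Poly_Mapping"
begin

text \<open>A tree different from the one-leaf tree |.  A child equal to None is the
  leaf |; so every such tree is uniquely  l \/_y r.\<close>
datatype 'a dtree = Vert "'a dtree option" 'a "'a dtree option"

text \<open>Decorations in Delta X = X x N: the pair (x,n) stands for x^(n).\<close>
type_synonym 'x dd_basis = "('x \<times> nat) dtree"

text \<open>DD(Delta X): the free k-module on all trees other than |, as finitely
  supported functions.\<close>
type_synonym ('x, 'k) DD = "'x dd_basis \<Rightarrow>\<^sub>0 'k"

definition pm_scale :: "'k::comm_ring_1 \<Rightarrow> ('b \<Rightarrow>\<^sub>0 'k) \<Rightarrow> ('b \<Rightarrow>\<^sub>0 'k)" where
  "pm_scale c p = Poly_Mapping.map (\<lambda>a. c * a) p"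

definition lin_ext :: "('a \<Rightarrow> ('b \<Rightarrow>\<^sub>0 'k::comm_ring_1)) \<Rightarrow> ('a \<Rightarrow>\<^sub>0 'k) \<Rightarrow> ('b \<Rightarrow>\<^sub>0 'k)" where
  "lin_ext f p = (\<Sum>t\<in>Poly_Mapping.keys p. pm_scale (Poly_Mapping.lookup p t) (f t))"

definition graftR :: "'a dtree option \<Rightarrow> 'a \<Rightarrow> ('a dtree \<Rightarrow>\<^sub>0 'k::comm_ring_1) \<Rightarrow> ('a dtree \<Rightarrow>\<^sub>0 'k)" where
  "graftR l x p = lin_ext (\<lambda>t. Poly_Mapping.single (Vert l x (Some t)) 1) p"

definition graftL :: "('a dtree \<Rightarrow>\<^sub>0 'k::comm_ring_1) \<Rightarrow> 'a \<Rightarrow> 'a dtree option \<Rightarrow> ('a dtree \<Rightarrow>\<^sub>0 'k)" where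
  "graftL p y r = lin_ext (\<lambda>t. Poly_Mapping.single (Vert (Some t) y r) 1) p"

text \<open>The operations on basis trees (both different from |), using
  |>-tau = tau, tau<-| = tau, |<-tau = 0, tau>-| = 0.\<close>
fun dprec :: "'a dtree \<Rightarrow> 'a dtree \<Rightarrow> ('a dtree \<Rightarrow>\<^sub>0 'k::comm_ring_1)"
and dsucc :: "'a dtree \<Rightarrow> 'a dtree \<Rightarrow> ('a dtree \<Rightarrow>\<^sub>0 'k::comm_ring_1)" where
  "dprec (Vert l x r) s = graftR l x
     (case r of None \<Rightarrow> Poly_Mapping.single s 1 | Some r' \<Rightarrow> dprec r' s + dsucc r' s)"
| "dsucc t (Vert l y r) = graftL
     (case l of None \<Rightarrow> Poly_Mapping.single t 1 | Some l' \<Rightarrow> dprec t l' + dsucc t l') y r"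

definition DD_prec :: "('x, 'k::comm_ring_1) DD \<Rightarrow> ('x, 'k) DD \<Rightarrow> ('x, 'k) DD" where
  "DD_prec p q = lin_ext (\<lambda>t. lin_ext (\<lambda>s. dprec t s) q) p"

definition DD_succ :: "('x, 'k::comm_ring_1) DD \<Rightarrow> ('x, 'k) DD \<Rightarrow> ('x, 'k) DD" where
  "DD_succ p q = lin_ext (\<lambda>t. lin_ext (\<lambda>s. dsucc t s) q) p"

text \<open>All trees tau_S for subsets S of the internal vertices (including S empty),
  each paired with |S|; distinct S give distinct list entries.\<close>
fun subsets_bump :: "('x \<times> nat) dtree option \<Rightarrow> (('x \<times> nat) dtree option \<times> nat) list" where
  "subsets_bump None = [(None, 0)]"
| "subsets_bump (Some (Vert l (x, n) r)) =
     [(Some (Vert l' (x, n + b) r'), kl + b + kr).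
        (l', kl) \<leftarrow> subsets_bump l, b \<leftarrow> [0, 1], (r', kr) \<leftarrow> subsets_bump r]"

definition dX_basis :: "'k::comm_ring_1 \<Rightarrow> 'x dd_basis \<Rightarrow> ('x, 'k) DD" where
  "dX_basis lam t = (\<Sum>(t', k) \<leftarrow> subsets_bump (Some t).
      if k = 0 then 0 else Poly_Mapping.single (the t') (lam ^ (k - 1)))"

definition dX :: "'k::comm_ring_1 \<Rightarrow> ('x, 'k) DD \<Rightarrow> ('x, 'k) DD" where
  "dX lam p = lin_ext (dX_basis lam) p"

definition jX :: "'x \<Rightarrow> ('x, 'k::comm_ring_1) DD" where
  "jX x = Poly_Mapping.single (Vert None (x, 0) None) 1"

definition bilinear_op :: "('k::comm_ring_1 \<Rightarrow> 'd::ab_group_add \<Rightarrow> 'd) \<Rightarrow> ('d \<Rightarrow> 'd \<Rightarrow> 'd) \<Rightarrow> bool" where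
  "bilinear_op s m \<longleftrightarrow> (\<forall>a. module_hom s s (m a)) \<and> (\<forall>b. module_hom s s (\<lambda>a. m a b))"

definition dendriform_algebra ::
  "('k::comm_ring_1 \<Rightarrow> 'd::ab_group_add \<Rightarrow> 'd) \<Rightarrow> ('d \<Rightarrow> 'd \<Rightarrow> 'd) \<Rightarrow> ('d \<Rightarrow> 'd \<Rightarrow> 'd) \<Rightarrow> bool" where
  "dendriform_algebra s prec succ \<longleftrightarrow> module s \<and> bilinear_op s prec \<and> bilinear_op s succ \<and>
     (\<forall>a b c. prec (prec a b) c = prec a (prec b c + succ b c)) \<and>
     (\<forall>a b c. prec (succ a b) c = succ a (prec b c)) \<and>
     (\<forall>a b c. succ (prec a b + succ a b) c = succ a (succ b c))"

definition derivation_wt ::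
  "('k::comm_ring_1 \<Rightarrow> 'd::ab_group_add \<Rightarrow> 'd) \<Rightarrow> ('d \<Rightarrow> 'd \<Rightarrow> 'd) \<Rightarrow> ('d \<Rightarrow> 'd \<Rightarrow> 'd) \<Rightarrow> ('d \<Rightarrow> 'd) \<Rightarrow> 'k \<Rightarrow> bool" where
  "derivation_wt s prec succ d lam \<longleftrightarrow> module_hom s s d \<and>
     (\<forall>a b. d (prec a b) = prec (d a) b + prec a (d b) + s lam (prec (d a) (d b))) \<and>
     (\<forall>a b. d (succ a b) = succ (d a) b + succ a (d b) + s lam (succ (d a) (d b)))"

definition diff_dendriform_algebra ::
  "('k::comm_ring_1 \<Rightarrow> 'd::ab_group_add \<Rightarrow> 'd) \<Rightarrow> ('d \<Rightarrow> 'd \<Rightarrow> 'd) \<Rightarrow> ('d \<Rightarrow> 'd \<Rightarrow> 'd) \<Rightarrow> ('d \<Rightarrow> 'd) \<Rightarrow> 'k \<Rightarrow> bool" where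
  "diff_dendriform_algebra s prec succ d lam \<longleftrightarrow>
     dendriform_algebra s prec succ \<and> derivation_wt s prec succ d lam"

end

theory Submission imports Defs begin

abbreviation lookup where "lookup \<equiv> Poly_Mapping.lookup"
abbreviation keys where "keys \<equiv> Poly_Mapping.keys"
abbreviation single where "single \<equiv> Poly_Mapping.single"

lemma lookup_pm_scale[simp]: "lookup (pm_scale c p) t = c * lookup p t"
  by (simp add: pm_scale_def Poly_Mapping.map.rep_eq when_def)

lemma module_pm_scale: "module (pm_scale :: 'k::comm_ring_1 \<Rightarrow> ('b \<Rightarrow>\<^sub>0 'k) \<Rightarrow> _)"
  by unfold_locales (rule poly_mapping_eqI; simp add: lookup_add algebra_simps)+

lemma pm_scale_simps[simp]:
  "pm_scale c (p + q) = pm_scale c p + pm_scale c q"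
  "pm_scale c (pm_scale d p) = pm_scale (c * d) p"
  "pm_scale 1 p = p" "pm_scale 0 p = 0" "pm_scale c 0 = 0"
  "pm_scale c (single t d) = single t (c * d)"
  by (rule poly_mapping_eqI; simp add: lookup_add algebra_simps lookup_single when_def)+

definition lext :: "('k::comm_ring_1 \<Rightarrow> 'd::ab_group_add \<Rightarrow> 'd) \<Rightarrow> ('a \<Rightarrow> 'd) \<Rightarrow> ('a \<Rightarrow>\<^sub>0 'k) \<Rightarrow> 'd" where
  "lext s f p = (\<Sum>t\<in>keys p. s (lookup p t) (f t))"

lemma lin_ext_lext: "lin_ext f = lext pm_scale f"
  by (auto simp: lin_ext_def lext_def fun_eq_iff)

lemma (in module) lext_superset:
  assumes "finite A" "keys p \<subseteq> A"
  shows "lext scale f p = (\<Sum>t\<in>A. scale (lookup p t) (f t))"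
  unfolding lext_def using assms
  by (intro sum.mono_neutral_left) (auto simp: in_keys_iff)

lemma (in module) lext_add: "lext scale f (p + q) = lext scale f p + lext scale f q"
  unfolding lext_def by (rule setsum_keys_plus_distrib) (auto simp: scale_left_distrib)

lemma (in module) lext_single[simp]: "lext scale f (single t c) = scale c (f t)"
  unfolding lext_def by auto

lemma (in module) lext_zero[simp]: "lext scale f 0 = 0"
  unfolding lext_def by auto

lemma (in module) scale_sum: "scale c (sum g A) = (\<Sum>x\<in>A. scale c (g x))"
  by (induct A rule: infinite_finite_induct) (simp_all add: scale_right_distrib)

lemma (in module) lext_scale: "lext scale f (pm_scale c p) = scale c (lext scale f p)"
proof -
  have k: "keys (pm_scale c p) \<subseteq> keys p" by (auto simp: in_keys_iff)
  show ?thesis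
    by (subst lext_superset[OF finite_keys k]) (simp_all add: lext_def scale_sum)
qed

lemma (in module) lext_fun_add: "lext scale (\<lambda>t. f t + g t) p = lext scale f p + lext scale g p"
  unfolding lext_def by (simp add: scale_right_distrib sum.distrib)

lemma (in module) lext_fun_scale: "lext scale (\<lambda>t. scale c (f t)) p = scale c (lext scale f p)"
  unfolding lext_def by (simp add: scale_sum mult.commute)

lemma lext_cong: "(\<And>t. t \<in> keys p \<Longrightarrow> f t = g t) \<Longrightarrow> lext s f p = lext s g p"
  unfolding lext_def by simp

definition lin :: "('k::comm_ring_1 \<Rightarrow> 'a::ab_group_add \<Rightarrow> 'a) \<Rightarrow> ('k \<Rightarrow> 'b::ab_group_add \<Rightarrow> 'b) \<Rightarrow> ('a \<Rightarrow> 'b) \<Rightarrow> bool" where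
  "lin s1 s2 F \<longleftrightarrow> (\<forall>p q. F (p + q) = F p + F q) \<and> (\<forall>c p. F (s1 c p) = s2 c (F p))"

lemma sum_singles: "(\<Sum>t\<in>keys p. single t (lookup p t)) = p"
proof (rule poly_mapping_eqI)
  fix k
  have "lookup (\<Sum>t\<in>keys p. single t (lookup p t)) k = (\<Sum>t\<in>keys p. if t = k then lookup p t else 0)"
    by (simp add: lookup_sum lookup_single when_def)
  also have "\<dots> = lookup p k" by (simp add: in_keys_iff)
  finally show "lookup (\<Sum>t\<in>keys p. single t (lookup p t)) k = lookup p k" .
qed

lemma lin_eq_lext:
  assumes "lin pm_scale s F"
  shows "F p = lext s (\<lambda>t. F (single t 1)) p"
proof -
  have add: "F (x + y) = F x + F y" for x y using assms by (simp add: lin_def)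
  have sc: "F (pm_scale c x) = s c (F x)" for c x using assms by (simp add: lin_def)
  interpret additive F by unfold_locales (rule add)
  have sg: "F (single t c) = s c (F (single t 1))" for t c
    using sc[of c "single t 1"] by simp
  have "F p = F (\<Sum>t\<in>keys p. single t (lookup p t))" by (simp add: sum_singles)
  also have "\<dots> = (\<Sum>t\<in>keys p. F (single t (lookup p t)))" by (rule sum)
  also have "\<dots> = (\<Sum>t\<in>keys p. s (lookup p t) (F (single t 1)))"
    by (rule sum.cong[OF refl], rule sg)
  finally show ?thesis by (simp add: lext_def)
qed

lemma lin_unique:
  assumes "lin pm_scale s F" "lin pm_scale s G" "\<And>t. F (single t 1) = G (single t 1)"
  shows "F p = G p"
proof -
  have "F p = lext s (\<lambda>t. F (single t 1)) p" by (rule lin_eq_lext[OF assms(1)])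
  also have "\<dots> = lext s (\<lambda>t. G (single t 1)) p" by (simp only: assms(3))
  also have "\<dots> = G p" by (rule lin_eq_lext[OF assms(2), symmetric])
  finally show ?thesis .
qed

lemma lin_unique2:
  assumes "\<And>Q. lin pm_scale s (\<lambda>P. F P Q)" "\<And>Q. lin pm_scale s (\<lambda>P. G P Q)"
    "\<And>a. lin pm_scale s (\<lambda>Q. F (single a 1) Q)" "\<And>a. lin pm_scale s (\<lambda>Q. G (single a 1) Q)"
    "\<And>a b. F (single a 1) (single b 1) = G (single a 1) (single b 1)"
  shows "F P Q = G P Q"
proof -
  have h1: "F (single a 1) Q = G (single a 1) Q" for a Q by (rule lin_unique[OF assms(3,4)]) (rule assms(5))
  show ?thesis by (rule lin_unique[OF assms(1,2)]) (rule h1)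
qed

lemma lin_unique3:
  assumes "\<And>Q R. lin pm_scale s (\<lambda>P. F P Q R)" "\<And>Q R. lin pm_scale s (\<lambda>P. G P Q R)"
    "\<And>a R. lin pm_scale s (\<lambda>Q. F (single a 1) Q R)" "\<And>a R. lin pm_scale s (\<lambda>Q. G (single a 1) Q R)"
    "\<And>a b. lin pm_scale s (\<lambda>R. F (single a 1) (single b 1) R)"
    "\<And>a b. lin pm_scale s (\<lambda>R. G (single a 1) (single b 1) R)"
    "\<And>a b c. F (single a 1) (single b 1) (single c 1) = G (single a 1) (single b 1) (single c 1)"
  shows "F P Q R = G P Q R"
proof -
  have h2: "F (single a 1) (single b 1) R = G (single a 1) (single b 1) R" for a b R
    by (rule lin_unique[OF assms(5,6)]) (rule assms(7))
  have h1: "F (single a 1) Q R = G (single a 1) Q R" for a Q R by (rule lin_unique[OF assms(3,4)]) (rule h2)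
  show ?thesis by (rule lin_unique[OF assms(1,2)]) (rule h1)
qed

lemma (in module) lin_lext: "lin pm_scale scale (lext scale f)"
  unfolding lin_def by (simp add: lext_add lext_scale)

lemma (in module) lin_lext_inner: "(\<And>t. lin s1 scale (G t)) \<Longrightarrow> lin s1 scale (\<lambda>q. lext scale (\<lambda>t. G t q) p)"
  unfolding lin_def by (simp add: lext_fun_add lext_fun_scale)

lemma lin_id: "lin s s (\<lambda>x. x)" by (simp add: lin_def)

lemma lin_comp: "lin s1 s2 F \<Longrightarrow> lin s2 s3 G \<Longrightarrow> lin s1 s3 (\<lambda>x. G (F x))"
  by (simp add: lin_def)

lemma (in module) lin_plus: "lin s1 scale F \<Longrightarrow> lin s1 scale G \<Longrightarrow> lin s1 scale (\<lambda>x. F x + G x)"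
  by (simp add: lin_def scale_right_distrib)

lemma (in module) lin_scale: "lin s1 scale F \<Longrightarrow> lin s1 scale (\<lambda>x. scale c (F x))"
  by (simp add: lin_def scale_right_distrib mult.commute)

lemma (in module) lin_zero: "lin s1 scale (\<lambda>x. 0)"
  by (simp add: lin_def)


lemmas lin_ext_add = module.lext_add[OF module_pm_scale, folded lin_ext_lext]
lemmas lin_ext_scale = module.lext_scale[OF module_pm_scale, folded lin_ext_lext]
lemmas lin_ext_zero[simp] = module.lext_zero[OF module_pm_scale, folded lin_ext_lext]
lemma lin_ext_single[simp]: "lin_ext f (single t c) = pm_scale c (f t)"
  by (simp add: lin_ext_lext module.lext_single[OF module_pm_scale])
lemma lin_lin_ext: "lin pm_scale pm_scale (lin_ext f)"
  by (simp add: lin_ext_lext module.lin_lext[OF module_pm_scale])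
lemma lin_lin_ext_inner: "(\<And>t. lin s1 pm_scale (G t)) \<Longrightarrow> lin s1 pm_scale (\<lambda>q. lin_ext (\<lambda>t. G t q) p)"
  by (simp add: lin_ext_lext module.lin_lext_inner[OF module_pm_scale])
lemmas lin_pm_plus = module.lin_plus[OF module_pm_scale]
lemmas lin_pm_scale = module.lin_scale[OF module_pm_scale]
lemmas lin_pm_zero = module.lin_zero[OF module_pm_scale]

section \<open>Augmented space and grafting\<close>

definition emb :: "('a dtree \<Rightarrow>\<^sub>0 'k::comm_ring_1) \<Rightarrow> ('a dtree option \<Rightarrow>\<^sub>0 'k)" where
  "emb Q = lin_ext (\<lambda>t. single (Some t) 1) Q"

definition Gr :: "('a dtree option \<Rightarrow>\<^sub>0 'k::comm_ring_1) \<Rightarrow> 'a \<Rightarrow> ('a dtree option \<Rightarrow>\<^sub>0 'k) \<Rightarrow> ('a dtree \<Rightarrow>\<^sub>0 'k)" where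
  "Gr P y Q = lin_ext (\<lambda>a. lin_ext (\<lambda>b. single (Vert a y b) 1) Q) P"

abbreviation pr where "pr \<equiv> DD_prec"
abbreviation su where "su \<equiv> DD_succ"

definition starb :: "('x \<times> nat) dtree option \<Rightarrow> ('x \<times> nat) dtree option \<Rightarrow> (('x \<times> nat) dtree option \<Rightarrow>\<^sub>0 'k::comm_ring_1)" where
  "starb a b = (case a of None \<Rightarrow> single b 1 | Some t \<Rightarrow> (case b of None \<Rightarrow> single a 1
      | Some s \<Rightarrow> emb (dprec t s + dsucc t s)))"

definition star :: "(('x \<times> nat) dtree option \<Rightarrow>\<^sub>0 'k::comm_ring_1) \<Rightarrow> (('x \<times> nat) dtree option \<Rightarrow>\<^sub>0 'k) \<Rightarrow> (('x \<times> nat) dtree option \<Rightarrow>\<^sub>0 'k)" where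
  "star P Q = lin_ext (\<lambda>a. lin_ext (\<lambda>b. starb a b) Q) P"

lemma lin_emb: "lin pm_scale pm_scale emb"
  unfolding emb_def[abs_def] by (rule lin_lin_ext)
lemma lin_Gr1: "lin pm_scale pm_scale (\<lambda>P. Gr P y Q)"
  unfolding Gr_def by (rule lin_lin_ext)
lemma lin_Gr2: "lin pm_scale pm_scale (\<lambda>Q. Gr P y Q)"
  unfolding Gr_def by (rule lin_lin_ext_inner, rule lin_lin_ext)
lemma lin_star1: "lin pm_scale pm_scale (\<lambda>P. star P Q)"
  unfolding star_def by (rule lin_lin_ext)
lemma lin_star2: "lin pm_scale pm_scale (\<lambda>Q. star P Q)"
  unfolding star_def by (rule lin_lin_ext_inner, rule lin_lin_ext)
lemma lin_pr1: "lin pm_scale pm_scale (\<lambda>P. pr P Q)"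
  unfolding DD_prec_def by (rule lin_lin_ext)
lemma lin_pr2: "lin pm_scale pm_scale (\<lambda>Q. pr P Q)"
  unfolding DD_prec_def by (rule lin_lin_ext_inner, rule lin_lin_ext)
lemma lin_su1: "lin pm_scale pm_scale (\<lambda>P. su P Q)"
  unfolding DD_succ_def by (rule lin_lin_ext)
lemma lin_su2: "lin pm_scale pm_scale (\<lambda>Q. su P Q)"
  unfolding DD_succ_def by (rule lin_lin_ext_inner, rule lin_lin_ext)
lemma lin_dX: "lin pm_scale pm_scale (dX lam)"
  unfolding dX_def[abs_def] by (rule lin_lin_ext)

lemma lin_c_emb: "lin s pm_scale F \<Longrightarrow> lin s pm_scale (\<lambda>x. emb (F x))"
  by (rule lin_comp[OF _ lin_emb])
lemma lin_c_Gr1: "lin s pm_scale F \<Longrightarrow> lin s pm_scale (\<lambda>x. Gr (F x) y Q)"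
  by (rule lin_comp[OF _ lin_Gr1])
lemma lin_c_Gr2: "lin s pm_scale F \<Longrightarrow> lin s pm_scale (\<lambda>x. Gr P y (F x))"
  by (rule lin_comp[OF _ lin_Gr2])
lemma lin_c_star1: "lin s pm_scale F \<Longrightarrow> lin s pm_scale (\<lambda>x. star (F x) Q)"
  by (rule lin_comp[OF _ lin_star1])
lemma lin_c_star2: "lin s pm_scale F \<Longrightarrow> lin s pm_scale (\<lambda>x. star P (F x))"
  by (rule lin_comp[OF _ lin_star2])
lemma lin_c_pr1: "lin s pm_scale F \<Longrightarrow> lin s pm_scale (\<lambda>x. pr (F x) Q)"
  by (rule lin_comp[OF _ lin_pr1])
lemma lin_c_pr2: "lin s pm_scale F \<Longrightarrow> lin s pm_scale (\<lambda>x. pr P (F x))"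
  by (rule lin_comp[OF _ lin_pr2])
lemma lin_c_su1: "lin s pm_scale F \<Longrightarrow> lin s pm_scale (\<lambda>x. su (F x) Q)"
  by (rule lin_comp[OF _ lin_su1])
lemma lin_c_su2: "lin s pm_scale F \<Longrightarrow> lin s pm_scale (\<lambda>x. su P (F x))"
  by (rule lin_comp[OF _ lin_su2])
lemma lin_c_dX: "lin s pm_scale F \<Longrightarrow> lin s pm_scale (\<lambda>x. dX lam (F x))"
  by (rule lin_comp[OF _ lin_dX])
lemma lin_c_lin_ext: "lin s pm_scale F \<Longrightarrow> lin s pm_scale (\<lambda>x. lin_ext f (F x))"
  by (rule lin_comp[OF _ lin_lin_ext])

lemmas lin_intros = lin_id lin_c_emb lin_c_Gr1 lin_c_Gr2 lin_c_star1 lin_c_star2 lin_c_pr1 lin_c_pr2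
  lin_c_su1 lin_c_su2 lin_c_dX lin_c_lin_ext lin_pm_plus lin_pm_scale lin_pm_zero

lemma emb_single[simp]: "emb (single t c) = single (Some t) c"
  by (simp add: emb_def)
lemma Gr_single: "Gr (single a c) y (single b d) = single (Vert a y b) (c * d)"
  by (simp add: Gr_def)
lemma star_single: "star (single a 1) (single b 1) = starb a b"
  by (simp add: star_def)
lemma pr_single[simp]: "pr (single t 1) (single s 1) = dprec t s"
  by (simp add: DD_prec_def)
lemma su_single[simp]: "su (single t 1) (single s 1) = dsucc t s"
  by (simp add: DD_succ_def)

lemma graftR_Gr: "graftR a x Q = Gr (single a 1) x (emb Q)"
proof (rule lin_unique[where F="graftR a x" and G="\<lambda>Q. Gr (single a 1) x (emb Q)"])
  show "lin pm_scale pm_scale (graftR a x)" unfolding graftR_def[abs_def] by (rule lin_lin_ext)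
  show "lin pm_scale pm_scale (\<lambda>Q. Gr (single a 1) x (emb Q))" by (intro lin_intros)
qed (simp add: graftR_def Gr_single)

lemma graftL_Gr: "graftL P y r = Gr (emb P) y (single r 1)"
proof (rule lin_unique[where s=pm_scale and F="\<lambda>P. graftL P y r" and G="\<lambda>P. Gr (emb P) y (single r 1)"])
  show "lin pm_scale pm_scale (\<lambda>P. graftL P y r)" unfolding graftL_def by (rule lin_lin_ext)
  show "lin pm_scale pm_scale (\<lambda>P. Gr (emb P) y (single r 1))" by (intro lin_intros)
qed (simp add: graftL_def Gr_single)

lemma dprec_Gr: "dprec (Vert a x b) s = Gr (single a 1) x (star (single b 1) (single (Some s) 1))"
  by (cases b) (simp_all add: graftR_Gr starb_def Gr_single star_single)

lemma dsucc_Gr: "dsucc t (Vert c y d) = Gr (star (single (Some t) 1) (single c 1)) y (single d 1)"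
  by (cases c) (simp_all add: graftL_Gr starb_def Gr_single star_single)

declare dprec.simps[simp del] dsucc.simps[simp del]


lemma lin_add: "lin s1 s2 F \<Longrightarrow> F (p + q) = F p + F q" by (simp add: lin_def)
lemma lin_sc: "lin s1 s2 F \<Longrightarrow> F (s1 c p) = s2 c (F p)" by (simp add: lin_def)
lemma lin_0: "lin s1 s2 F \<Longrightarrow> F 0 = 0"
  using lin_add[of s1 s2 F 0 0] by simp

lemmas lin_simps = lin_add[OF lin_emb] lin_sc[OF lin_emb] lin_0[OF lin_emb]
  lin_add[OF lin_Gr1] lin_sc[OF lin_Gr1] lin_0[OF lin_Gr1]
  lin_add[OF lin_Gr2] lin_sc[OF lin_Gr2] lin_0[OF lin_Gr2]
  lin_add[OF lin_star1] lin_sc[OF lin_star1] lin_0[OF lin_star1]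
  lin_add[OF lin_star2] lin_sc[OF lin_star2] lin_0[OF lin_star2]
  lin_add[OF lin_pr1] lin_sc[OF lin_pr1] lin_0[OF lin_pr1]
  lin_add[OF lin_pr2] lin_sc[OF lin_pr2] lin_0[OF lin_pr2]
  lin_add[OF lin_su1] lin_sc[OF lin_su1] lin_0[OF lin_su1]
  lin_add[OF lin_su2] lin_sc[OF lin_su2] lin_0[OF lin_su2]
  lin_add[OF lin_dX] lin_sc[OF lin_dX] lin_0[OF lin_dX]

lemma K1: "pr (Gr P x Q) S = Gr P x (star Q (emb S))"
  by (rule lin_unique3[where s=pm_scale and F="\<lambda>P Q S. pr (Gr P x Q) S" and G="\<lambda>P Q S. Gr P x (star Q (emb S))"];
      (intro lin_intros)?) (simp add: dprec_Gr Gr_single)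

lemma K2: "su T (Gr P y Q) = Gr (star (emb T) P) y Q"
  by (rule lin_unique3[where s=pm_scale and F="\<lambda>T P Q. su T (Gr P y Q)" and G="\<lambda>T P Q. Gr (star (emb T) P) y Q"];
      (intro lin_intros)?) (simp add: dsucc_Gr Gr_single)

lemma K3: "emb (pr T S + su T S) = star (emb T) (emb S)"
  by (rule lin_unique2[where s=pm_scale and F="\<lambda>T S. emb (pr T S + su T S)" and G="\<lambda>T S. star (emb T) (emb S)"];
      (intro lin_intros)?) (simp add: starb_def star_single)

lemma K4a: "star (single None 1) Q = Q"
  by (rule lin_unique[where s=pm_scale and F="\<lambda>Q. star (single None 1) Q" and G="\<lambda>Q. Q"];
      (intro lin_intros)?) (simp add: starb_def star_single)

lemma K4b: "star P (single None 1) = P"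
  by (rule lin_unique[where s=pm_scale and F="\<lambda>P. star P (single None 1)" and G="\<lambda>P. P"];
      (intro lin_intros)?) (simp add: starb_def star_single split: option.split)

lemma K5: "single (Vert a y b) 1 = Gr (single a 1) y (single b 1)"
  by (simp add: Gr_single)


abbreviation mu where "mu P Q \<equiv> pr P Q + su P Q"

lemma mu_assoc_of:
  assumes "pr (pr T S) U = pr T (mu S U)" "pr (su T S) U = su T (pr S U)" "su (mu T S) U = su T (su S U)"
  shows "mu (mu T S) U = mu T (mu S U)"
  using assms by (simp add: lin_simps add.assoc)

lemma assoc_Some:
  assumes "mu (mu (single t 1) (single s 1)) (single u (1::'k::comm_ring_1)) = mu (single t 1) (mu (single s 1) (single u 1))"
  shows "star (star (single (Some t) 1) (single (Some s) 1)) (single (Some u) 1) =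
         star (single (Some t) 1) (star (single (Some s) 1) (single (Some u) (1::'k)))"
proof -
  have e: "single (Some t) 1 = emb (single t (1::'k))" for t :: "('x \<times> nat) dtree" by simp
  show ?thesis unfolding e K3[symmetric] by (rule arg_cong[where f=emb, OF assms])
qed

lemma dend_basis:
  fixes t s u :: "('x \<times> nat) dtree"
  shows "pr (pr (single t 1) (single s 1)) (single u (1::'k::comm_ring_1)) = pr (single t 1) (mu (single s 1) (single u 1)) \<and>
         pr (su (single t 1) (single s 1)) (single u (1::'k)) = su (single t 1) (pr (single s 1) (single u 1)) \<and>
         su (mu (single t 1) (single s 1)) (single u (1::'k)) = su (single t 1) (su (single s 1) (single u 1))"
proof (induction "size t + size u" arbitrary: t s u rule: less_induct)
  case less
  obtain a x b where t: "t = Vert a x b" by (cases t)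
  obtain c y d where u: "u = Vert c y d" by (cases u)
  obtain c2 y2 d2 where s: "s = Vert c2 y2 d2" by (cases s)
  have A1: "star (star (single b 1) (single (Some s) 1)) (single (Some u) 1) =
      star (single b 1) (star (single (Some s) 1) (single (Some u) (1::'k)))"
  proof (cases b)
    case None then show ?thesis by (simp add: K4a)
  next
    case (Some b')
    have "size b' + size u < size t + size u" using t Some by simp
    from less[OF this] show ?thesis unfolding Some by (intro assoc_Some mu_assoc_of) auto
  qed
  have A3: "star (star (single (Some t) 1) (single (Some s) 1)) (single c 1) =
      star (single (Some t) 1) (star (single (Some s) 1) (single c (1::'k)))"
  proof (cases c)
    case None then show ?thesis by (simp add: K4b)
  next
    case (Some c')
    have "size t + size c' < size t + size u" using u Some by simp
    from less[OF this] show ?thesis unfolding Some by (intro assoc_Some mu_assoc_of) auto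
  qed
  have T: "single t (1::'k) = Gr (single a 1) x (single b 1)" by (simp add: t Gr_single)
  have S: "single s (1::'k) = Gr (single c2 1) y2 (single d2 1)" by (simp add: s Gr_single)
  have U: "single u (1::'k) = Gr (single c 1) y (single d 1)" by (simp add: u Gr_single)
  have P1: "pr (pr (single t 1) (single s 1)) (single u (1::'k)) = pr (single t 1) (mu (single s 1) (single u 1))"
  proof -
    have "pr (pr (single t 1) (single s 1)) (single u (1::'k)) =
       Gr (single a 1) x (star (star (single b 1) (emb (single s 1))) (emb (single u 1)))"
      unfolding T K1 ..
    also have "\<dots> = Gr (single a 1) x (star (single b 1) (star (emb (single s 1)) (emb (single u 1))))"
      using A1 by simp
    also have "\<dots> = pr (single t 1) (mu (single s 1) (single u 1))"
      unfolding T K1 K3 ..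
    finally show ?thesis .
  qed
  have P2: "pr (su (single t 1) (single s 1)) (single u (1::'k)) = su (single t 1) (pr (single s 1) (single u 1))"
    unfolding S K1 K2 ..
  have P3: "su (mu (single t 1) (single s 1)) (single u (1::'k)) = su (single t 1) (su (single s 1) (single u 1))"
  proof -
    have "su (mu (single t 1) (single s 1)) (single u (1::'k)) =
       Gr (star (star (emb (single t 1)) (emb (single s 1))) (single c 1)) y (single d 1)"
      unfolding U K2 K3 ..
    also have "\<dots> = Gr (star (emb (single t 1)) (star (emb (single s 1)) (single c 1))) y (single d 1)"
      using A3 by simp
    also have "\<dots> = su (single t 1) (su (single s 1) (single u 1))"
      unfolding U K2 ..
    finally show ?thesis .
  qed
  show ?case using P1 P2 P3 by blast
qed


lemma lin_module_hom: "module s1 \<Longrightarrow> module s2 \<Longrightarrow> lin s1 s2 F \<Longrightarrow> module_hom s1 s2 F"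
  unfolding module_hom_def module_hom_axioms_def lin_def by simp

lemma DD_dend: "dendriform_algebra (pm_scale :: 'k::comm_ring_1 \<Rightarrow> ('x, 'k) DD \<Rightarrow> ('x, 'k) DD) DD_prec DD_succ"
proof -
  have m: "module (pm_scale :: 'k::comm_ring_1 \<Rightarrow> ('x, 'k) DD \<Rightarrow> ('x, 'k) DD)" by (rule module_pm_scale)
  have b1: "bilinear_op (pm_scale :: 'k::comm_ring_1 \<Rightarrow> ('x, 'k) DD \<Rightarrow> ('x, 'k) DD) pr"
    unfolding bilinear_op_def using lin_module_hom[OF m m lin_pr1] lin_module_hom[OF m m lin_pr2] by blast
  have b2: "bilinear_op (pm_scale :: 'k::comm_ring_1 \<Rightarrow> ('x, 'k) DD \<Rightarrow> ('x, 'k) DD) su"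
    unfolding bilinear_op_def using lin_module_hom[OF m m lin_su1] lin_module_hom[OF m m lin_su2] by blast
  have a1: "pr (pr a b) c = pr a (mu b c)" for a b c :: "('x, 'k) DD"
    by (rule lin_unique3[where s=pm_scale and F="\<lambda>a b c. pr (pr a b) c" and G="\<lambda>a b c. pr a (mu b c)"];
      (intro lin_intros)?) (use dend_basis in blast)
  have a2: "pr (su a b) c = su a (pr b c)" for a b c :: "('x, 'k) DD"
    by (rule lin_unique3[where s=pm_scale and F="\<lambda>a b c. pr (su a b) c" and G="\<lambda>a b c. su a (pr b c)"];
      (intro lin_intros)?) (use dend_basis in blast)
  have a3: "su (mu a b) c = su a (su b c)" for a b c :: "('x, 'k) DD"
    by (rule lin_unique3[where s=pm_scale and F="\<lambda>a b c. su (mu a b) c" and G="\<lambda>a b c. su a (su b c)"];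
      (intro lin_intros)?) (use dend_basis in blast)
  show ?thesis unfolding dendriform_algebra_def using m b1 b2 a1 a2 a3 by blast
qed


section \<open>The derivation\<close>

definition wt :: "'k::comm_ring_1 \<Rightarrow> nat \<Rightarrow> 'k" where "wt lam k = (if k = 0 then 0 else lam ^ (k - 1))"
definition zt :: "nat \<Rightarrow> 'k::comm_ring_1" where "zt k = (if k = 0 then 1 else 0)"

lemma zt_add: "zt (p + q) = zt p * zt q" by (simp add: zt_def)
lemma zt_Suc: "zt (Suc m) = 0" by (simp add: zt_def)
lemma zt_Suc_add: "zt (Suc (p + q)) = zt p * (0 * zt q)" by (simp add: zt_def)
lemma wt_add: "wt lam (p + q) = wt lam p * zt q + zt p * wt lam q + (lam * wt lam p) * wt lam q"
  by (cases p; cases q) (simp_all add: wt_def zt_def power_add)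
lemma wt_Suc_add: "wt lam (Suc (p + q)) = zt p * zt q + (lam * wt lam p) * zt q + zt p * (lam * wt lam q)
    + (lam * lam * wt lam p) * wt lam q"
  by (cases p; cases q) (simp_all add: wt_def zt_def power_add)

lemma pm_scale_left: "pm_scale (a + b) p = pm_scale a p + pm_scale b p"
  by (rule poly_mapping_eqI) (simp add: lookup_add algebra_simps)

definition Sm :: "(nat \<Rightarrow> 'k::comm_ring_1) \<Rightarrow> ('x \<times> nat) dtree option \<Rightarrow> (('x \<times> nat) dtree option \<Rightarrow>\<^sub>0 'k)" where
  "Sm \<alpha> a = (\<Sum>(a',k)\<leftarrow>subsets_bump a. pm_scale (\<alpha> k) (single a' 1))"

lemma sum_list_map_concat: "sum_list (map g (concat (map f xs))) = (\<Sum>x\<leftarrow>xs. sum_list (map g (f x)))"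
  by (induct xs) auto

lemma lin_sum_list: "lin s1 s2 F \<Longrightarrow> F (sum_list (map g xs)) = (\<Sum>x\<leftarrow>xs. F (g x))"
  by (induct xs) (auto simp: lin_add lin_0)

lemma Sm_rec: "Sm \<alpha> (Some (Vert l (x,n) r)) =
   (\<Sum>(l',kl)\<leftarrow>subsets_bump l. \<Sum>(r',kr)\<leftarrow>subsets_bump r. pm_scale (\<alpha> (kl + kr)) (emb (Gr (single l' 1) (x,n) (single r' 1))))
 + (\<Sum>(l',kl)\<leftarrow>subsets_bump l. \<Sum>(r',kr)\<leftarrow>subsets_bump r. pm_scale (\<alpha> (Suc (kl + kr))) (emb (Gr (single l' 1) (x,Suc n) (single r' 1))))"
  unfolding Sm_def
  by (simp add: sum_list_map_concat split_def Gr_single sum_list_addf o_def)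

lemma DB_inner: "(\<Sum>(r',kr)\<leftarrow>M. pm_scale (c * \<beta> kr) (emb (Gr P y (single r' 1)))) =
   emb (Gr (pm_scale c P) y (\<Sum>(r',kr)\<leftarrow>M. pm_scale (\<beta> kr) (single r' 1)))"
  by (induct M) (auto simp: lin_simps simp del: pm_scale_simps(6))

lemma DB: "(\<Sum>(l',kl)\<leftarrow>L. \<Sum>(r',kr)\<leftarrow>M. pm_scale (\<alpha> kl * \<beta> kr) (emb (Gr (single l' 1) y (single r' 1)))) =
   emb (Gr (\<Sum>(l',kl)\<leftarrow>L. pm_scale (\<alpha> kl) (single l' 1)) y (\<Sum>(r',kr)\<leftarrow>M. pm_scale (\<beta> kr) (single r' 1)))"
  by (induct L) (auto simp: lin_simps DB_inner simp del: pm_scale_simps(6))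


lemma DB_Sm: "(\<Sum>(l',kl)\<leftarrow>subsets_bump l. \<Sum>(r',kr)\<leftarrow>subsets_bump r. pm_scale (\<alpha> kl * \<beta> kr) (emb (Gr (single l' 1) y (single r' 1)))) =
   emb (Gr (Sm \<alpha> l) y (Sm \<beta> r))"
  unfolding Sm_def by (rule DB)

lemma comb_split: "(\<Sum>(l',kl)\<leftarrow>L. \<Sum>(r',kr)\<leftarrow>M. pm_scale (f kl kr + g kl kr) (E l' r')) =
   (\<Sum>(l',kl)\<leftarrow>L. \<Sum>(r',kr)\<leftarrow>M. pm_scale (f kl kr) (E l' r')) +
   (\<Sum>(l',kl)\<leftarrow>L. \<Sum>(r',kr)\<leftarrow>M. pm_scale (g kl kr) (E l' r'))"
  by (simp add: split_def sum_list_addf pm_scale_left)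

lemma comb_zero: "(\<Sum>(l',kl)\<leftarrow>L. \<Sum>(r',kr)\<leftarrow>M. pm_scale (f kl * 0) (E l' r')) = 0"
  by (simp add: split_def)

lemma Sm_scale: "Sm (\<lambda>k. c * \<alpha> k) a = pm_scale c (Sm \<alpha> a)"
  unfolding Sm_def by (subst lin_sum_list[OF lin_pm_scale[OF lin_id]]) (simp add: split_def)

lemma Sm_zt_None: "Sm zt None = single None 1"
  by (simp add: Sm_def zt_def)

lemma Sm_zt_Some: "Sm zt (Some t) = single (Some t) (1::'k::comm_ring_1)"
proof (induction t)
  case (Vert l xn r)
  obtain x n where xn: "xn = (x, n)" by (cases xn)
  have hl: "Sm zt l = single l (1::'k)"
    using Vert(1) by (cases l) (auto simp: Sm_zt_None)
  have hr: "Sm zt r = single r (1::'k)"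
    using Vert(2) by (cases r) (auto simp: Sm_zt_None)
  show ?case
    unfolding xn
    apply (simp only: Sm_rec zt_add zt_Suc_add DB_Sm Sm_scale)
    apply (simp add: hl hr Gr_single lin_simps)
    done
qed

lemma Sm_zt: "Sm zt a = single a 1"
  by (cases a) (simp_all add: Sm_zt_None Sm_zt_Some)

lemma R_rec: "Sm (wt lam) (Some (Vert l (x,n) r)) = emb (
    Gr (Sm (wt lam) l) (x,n) (single r 1) + Gr (single l 1) (x,n) (Sm (wt lam) r)
  + pm_scale lam (Gr (Sm (wt lam) l) (x,n) (Sm (wt lam) r))
  + Gr (single l 1) (x,Suc n) (single r 1) + pm_scale lam (Gr (Sm (wt lam) l) (x,Suc n) (single r 1))
  + pm_scale lam (Gr (single l 1) (x,Suc n) (Sm (wt lam) r))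
  + pm_scale (lam * lam) (Gr (Sm (wt lam) l) (x,Suc n) (Sm (wt lam) r)))"
  apply (simp only: Sm_rec wt_add wt_Suc_add comb_split DB_Sm Sm_zt Sm_scale)
  apply (simp add: lin_simps add.assoc)
  done


definition dA :: "'k::comm_ring_1 \<Rightarrow> (('x \<times> nat) dtree option \<Rightarrow>\<^sub>0 'k) \<Rightarrow> (('x \<times> nat) dtree option \<Rightarrow>\<^sub>0 'k)" where
  "dA lam P = lin_ext (Sm (wt lam)) P"

lemma lin_dA: "lin pm_scale pm_scale (dA lam)"
  unfolding dA_def[abs_def] by (rule lin_lin_ext)
lemma lin_c_dA: "lin s pm_scale F \<Longrightarrow> lin s pm_scale (\<lambda>x. dA lam (F x))"
  by (rule lin_comp[OF _ lin_dA])
lemmas lin_intros2 = lin_intros lin_c_dA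
lemmas lin_simps2 = lin_simps lin_add[OF lin_dA] lin_sc[OF lin_dA] lin_0[OF lin_dA]

lemma dA_single: "dA lam (single a 1) = Sm (wt lam) a"
  by (simp add: dA_def)

lemma dA_None[simp]: "dA lam (single None 1) = 0"
  by (simp add: dA_def Sm_def wt_def)

lemma sb_Some: "(t', k) \<in> set (subsets_bump (Some t)) \<Longrightarrow> t' \<noteq> None"
  by (cases t) auto

lemma emb_dX_basis: "emb (dX_basis lam t) = Sm (wt lam) (Some t)"
proof -
  have "emb (dX_basis lam t) = (\<Sum>x\<leftarrow>subsets_bump (Some t).
      emb (case x of (t', k) \<Rightarrow> if k = 0 then 0 else single (the t') (lam ^ (k - 1))))"
    unfolding dX_basis_def by (rule lin_sum_list[OF lin_emb])
  also have "\<dots> = Sm (wt lam) (Some t)"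
    unfolding Sm_def
    by (rule arg_cong[where f=sum_list], rule map_cong[OF refl])
       (auto simp: wt_def lin_simps dest: sb_Some)
  finally show ?thesis .
qed

definition unemb :: "('a dtree option \<Rightarrow>\<^sub>0 'k::comm_ring_1) \<Rightarrow> ('a dtree \<Rightarrow>\<^sub>0 'k)" where
  "unemb Q = lin_ext (\<lambda>a. case a of None \<Rightarrow> 0 | Some t \<Rightarrow> single t 1) Q"

lemma unemb_emb: "unemb (emb P) = P"
  by (rule lin_unique[where s=pm_scale and F="\<lambda>P. unemb (emb P)" and G="\<lambda>P. P"])
     (auto simp: unemb_def[abs_def] intro!: lin_intros)

lemma emb_inj: "emb P = emb Q \<Longrightarrow> P = Q"
  by (metis unemb_emb)

lemma dA_emb: "dA lam (emb Q) = emb (dX lam Q)"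
  by (rule lin_unique[where s=pm_scale and F="\<lambda>Q. dA lam (emb Q)" and G="\<lambda>Q. emb (dX lam Q)"];
      (intro lin_intros2)?) (simp add: dA_single dX_def emb_dX_basis)

lemma dA_Some: "dA lam (single (Some t) 1) = emb (dX lam (single t 1))"
  using dA_emb[of lam "single t 1"] by simp

lemma K6: fixes lam :: "'k::comm_ring_1" shows "dX lam (Gr P (x,n) Q) = Gr (dA lam P) (x,n) Q + Gr P (x,n) (dA lam Q)
  + pm_scale lam (Gr (dA lam P) (x,n) (dA lam Q))
  + Gr P (x,Suc n) Q + pm_scale lam (Gr (dA lam P) (x,Suc n) Q)
  + pm_scale lam (Gr P (x,Suc n) (dA lam Q))
  + pm_scale (lam * lam) (Gr (dA lam P) (x,Suc n) (dA lam Q))"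
proof (rule lin_unique2[where s=pm_scale and F="\<lambda>P Q. dX lam (Gr P (x,n) Q)"]; (intro lin_intros2)?)
  fix a b
  show "dX lam (Gr (single a 1) (x, n) (single b 1)) = Gr (dA lam (single a 1)) (x,n) (single b 1) + Gr (single a 1) (x,n) (dA lam (single b 1))
  + pm_scale lam (Gr (dA lam (single a 1)) (x,n) (dA lam (single b 1)))
  + Gr (single a 1) (x,Suc n) (single b 1) + pm_scale lam (Gr (dA lam (single a 1)) (x,Suc n) (single b 1))
  + pm_scale lam (Gr (single a 1) (x,Suc n) (dA lam (single b 1)))
  + pm_scale (lam * lam) (Gr (dA lam (single a 1)) (x,Suc n) (dA lam (single b (1::'k::comm_ring_1))))"
    apply (rule emb_inj)
    apply (simp only: Gr_single[of a 1 "(x,n)" b 1] mult_1_right dX_def lin_ext_single pm_scale_simps(3) emb_dX_basis R_rec dA_single)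
    done
qed


abbreviation Lp where "Lp lam T S \<equiv> pr (dX lam T) S + pr T (dX lam S) + pm_scale lam (pr (dX lam T) (dX lam S))"
abbreviation Ls where "Ls lam T S \<equiv> su (dX lam T) S + su T (dX lam S) + pm_scale lam (su (dX lam T) (dX lam S))"
abbreviation LS where "LS lam P Q \<equiv> star (dA lam P) Q + star P (dA lam Q) + pm_scale lam (star (dA lam P) (dA lam Q))"

lemma LS_of:
  fixes lam :: "'k::comm_ring_1"
  assumes "dX lam (pr (single t 1) (single s 1)) = Lp lam (single t 1) (single s (1::'k))"
    "dX lam (su (single t 1) (single s 1)) = Ls lam (single t 1) (single s (1::'k))"
  shows "dA lam (star (single (Some t) 1) (single (Some s) 1)) = LS lam (single (Some t) 1) (single (Some s) (1::'k))"
proof -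
  have e: "single (Some t) 1 = emb (single t (1::'k))" for t :: "('x \<times> nat) dtree" by simp
  have "dA lam (star (emb (single t 1)) (emb (single s 1))) = emb (dX lam (mu (single t 1) (single s (1::'k))))"
    unfolding K3[symmetric] dA_emb ..
  also have "\<dots> = emb (Lp lam (single t 1) (single s 1) + Ls lam (single t 1) (single s 1))"
    using assms by (simp only: lin_simps)
  also have "\<dots> = LS lam (emb (single t 1)) (emb (single s (1::'k)))"
    unfolding dA_emb K3[symmetric] by (simp only: lin_simps add_ac pm_scale_simps(1))
  finally show ?thesis unfolding e .
qed

lemma LS_None1: "dA lam (star (single None 1) Q) = LS lam (single None 1) Q"
  by (simp add: K4a lin_simps2)
lemma LS_None2: "dA lam (star P (single None 1)) = LS lam P (single None 1)"
  by (simp add: K4b lin_simps2)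

lemma der_basis:
  fixes lam :: "'k::comm_ring_1" and t s :: "('x \<times> nat) dtree"
  shows "dX lam (pr (single t 1) (single s 1)) = Lp lam (single t 1) (single s (1::'k)) \<and>
         dX lam (su (single t 1) (single s 1)) = Ls lam (single t 1) (single s (1::'k))"
proof (induction "size t + size s" arbitrary: t s rule: less_induct)
  case less
  obtain a x n b where t: "t = Vert a (x,n) b" by (metis dtree.exhaust prod.exhaust)
  obtain c y m d where s: "s = Vert c (y,m) d" by (metis dtree.exhaust prod.exhaust)
  have LSb: "dA lam (star (single b 1) (single (Some s) 1)) = LS lam (single b 1) (single (Some s) (1::'k))"
  proof (cases b)
    case None then show ?thesis by (simp only: LS_None1)
  next
    case (Some b')
    have "size b' + size s < size t + size s" using t Some by simp
    from less[OF this] show ?thesis unfolding Some by (intro LS_of) auto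
  qed
  have LSc: "dA lam (star (single (Some t) 1) (single c 1)) = LS lam (single (Some t) 1) (single c (1::'k))"
  proof (cases c)
    case None then show ?thesis by (simp only: LS_None2)
  next
    case (Some c')
    have "size t + size c' < size t + size s" using s Some by simp
    from less[OF this] show ?thesis unfolding Some by (intro LS_of) auto
  qed
  have T: "single t (1::'k) = Gr (single a 1) (x,n) (single b 1)" by (simp add: t Gr_single)
  have S: "single s (1::'k) = Gr (single c 1) (y,m) (single d 1)" by (simp add: s Gr_single)
  have D1: "dX lam (pr (single t 1) (single s 1)) = Lp lam (single t 1) (single s (1::'k))"
    unfolding T K1 K6 emb_single LSb dA_Some
    by (simp add: lin_simps2 K1 add_ac mult_ac)
  have D2: "dX lam (su (single t 1) (single s 1)) = Ls lam (single t 1) (single s (1::'k))"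
    unfolding S K2 K6 emb_single LSc dA_Some
    by (simp add: lin_simps2 K2 add_ac mult_ac)
  show ?case using D1 D2 by blast
qed


lemma DD_diff: "diff_dendriform_algebra (pm_scale :: 'k::comm_ring_1 \<Rightarrow> ('x, 'k) DD \<Rightarrow> ('x, 'k) DD)
            DD_prec DD_succ (dX lam) lam"
proof -
  have m: "module (pm_scale :: 'k::comm_ring_1 \<Rightarrow> ('x, 'k) DD \<Rightarrow> ('x, 'k) DD)" by (rule module_pm_scale)
  have d1: "dX lam (pr a b) = Lp lam a b" for a b :: "('x, 'k) DD"
    by (rule lin_unique2[where s=pm_scale and F="\<lambda>a b. dX lam (pr a b)" and G="\<lambda>a b. Lp lam a b"];
      (intro lin_intros)?) (use der_basis in blast)
  have d2: "dX lam (su a b) = Ls lam a b" for a b :: "('x, 'k) DD"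
    by (rule lin_unique2[where s=pm_scale and F="\<lambda>a b. dX lam (su a b)" and G="\<lambda>a b. Ls lam a b"];
      (intro lin_intros)?) (use der_basis in blast)
  have "derivation_wt (pm_scale :: 'k::comm_ring_1 \<Rightarrow> ('x, 'k) DD \<Rightarrow> ('x, 'k) DD) pr su (dX lam) lam"
    unfolding derivation_wt_def using lin_module_hom[OF m m lin_dX] d1 d2 by blast
  then show ?thesis using DD_dend unfolding diff_dendriform_algebra_def by blast
qed


section \<open>Universal property\<close>

primrec Gt :: "('d \<Rightarrow> 'd \<Rightarrow> 'd) \<Rightarrow> ('d \<Rightarrow> 'd \<Rightarrow> 'd) \<Rightarrow> ('d \<Rightarrow> 'd) \<Rightarrow> ('x \<Rightarrow> 'd) \<Rightarrow> ('x \<times> nat) dtree \<Rightarrow> 'd" where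
  "Gt precD succD dD f (Vert a xn b) =
     (let X = (dD ^^ snd xn) (f (fst xn));
          L = (case map_option (Gt precD succD dD f) a of None \<Rightarrow> X | Some A \<Rightarrow> succD A X)
      in (case map_option (Gt precD succD dD f) b of None \<Rightarrow> L | Some B \<Rightarrow> precD L B))"

locale ddtgt =
  fixes sD :: "'k::comm_ring_1 \<Rightarrow> 'd::ab_group_add \<Rightarrow> 'd" and precD succD :: "'d \<Rightarrow> 'd \<Rightarrow> 'd"
    and dD :: "'d \<Rightarrow> 'd" and lam :: 'k and f :: "'x \<Rightarrow> 'd"
  assumes dda: "diff_dendriform_algebra sD precD succD dD lam"
begin

lemma mD: "module sD"
  using dda by (simp add: diff_dendriform_algebra_def dendriform_algebra_def)

lemma linp1: "lin sD sD (\<lambda>a. precD a c)" and linp2: "lin sD sD (\<lambda>c. precD a c)"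
  and lins1: "lin sD sD (\<lambda>a. succD a c)" and lins2: "lin sD sD (\<lambda>c. succD a c)"
  and lind: "lin sD sD dD"
  using dda unfolding diff_dendriform_algebra_def dendriform_algebra_def bilinear_op_def derivation_wt_def
    lin_def module_hom_def module_hom_axioms_def by auto

lemma ax1: "precD (precD a b) c = precD a (precD b c + succD b c)"
  and ax2: "precD (succD a b) c = succD a (precD b c)"
  and ax3: "succD (precD a b + succD a b) c = succD a (succD b c)"
  and der1: "dD (precD a b) = precD (dD a) b + precD a (dD b) + sD lam (precD (dD a) (dD b))"
  and der2: "dD (succD a b) = succD (dD a) b + succD a (dD b) + sD lam (succD (dD a) (dD b))"
  using dda unfolding diff_dendriform_algebra_def dendriform_algebra_def derivation_wt_def by auto

abbreviation "GG \<equiv> Gt precD succD dD f"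
definition g where "g = lext sD GG"
definition lsA where "lsA P X = lext sD (\<lambda>a. case a of None \<Rightarrow> X | Some t \<Rightarrow> succD (GG t) X) P"
definition rpA where "rpA Z Q = lext sD (\<lambda>b. case b of None \<Rightarrow> Z | Some t \<Rightarrow> precD Z (GG t)) Q"

lemma lin_g: "lin pm_scale sD g"
  unfolding g_def by (rule module.lin_lext[OF mD])
lemma lin_lsA: "lin pm_scale sD (\<lambda>P. lsA P X)"
  unfolding lsA_def by (rule module.lin_lext[OF mD])
lemma lin_rpA2: "lin pm_scale sD (\<lambda>Q. rpA Z Q)"
  unfolding rpA_def by (rule module.lin_lext[OF mD])
lemma lin_rpA1: "lin sD sD (\<lambda>Z. rpA Z Q)"
  unfolding rpA_def
  apply (rule module.lin_lext_inner[OF mD])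
  subgoal for b by (cases b) (simp_all add: lin_id linp1)
  done

lemma g_single: "g (single t 1) = GG t"
  by (simp add: g_def module.lext_single[OF mD] module.scale_one[OF mD])
lemma lsA_single: "lsA (single a 1) X = (case a of None \<Rightarrow> X | Some t \<Rightarrow> succD (GG t) X)"
  by (simp add: lsA_def module.lext_single[OF mD] module.scale_one[OF mD])
lemma rpA_single: "rpA Z (single b 1) = (case b of None \<Rightarrow> Z | Some t \<Rightarrow> precD Z (GG t))"
  by (simp add: rpA_def module.lext_single[OF mD] module.scale_one[OF mD])

abbreviation "XX x n \<equiv> (dD ^^ n) (f x)"

lemma U1: "g (Gr P (x,n) Q) = rpA (lsA P (XX x n)) Q"
proof (rule lin_unique2[where s=sD and F="\<lambda>P Q. g (Gr P (x,n) Q)" and G="\<lambda>P Q. rpA (lsA P (XX x n)) Q"])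
  show "lin pm_scale sD (\<lambda>P. g (Gr P (x,n) Q))" for Q by (rule lin_comp[OF lin_Gr1 lin_g])
  show "lin pm_scale sD (\<lambda>P. rpA (lsA P (XX x n)) Q)" for Q by (rule lin_comp[OF lin_lsA lin_rpA1])
  show "lin pm_scale sD (\<lambda>Q. g (Gr (single a 1) (x,n) Q))" for a by (rule lin_comp[OF lin_Gr2 lin_g])
  show "lin pm_scale sD (\<lambda>Q. rpA (lsA (single a 1) (XX x n)) Q)" for a by (rule lin_rpA2)
  show "g (Gr (single a 1) (x,n) (single b 1)) = rpA (lsA (single a 1) (XX x n)) (single b 1)" for a b
    by (cases a; cases b) (simp_all add: Gr_single g_single lsA_single rpA_single)
qed

lemma U2: "rpA Z (emb M) = precD Z (g M)"
  by (rule lin_unique[where s=sD and F="\<lambda>M. rpA Z (emb M)" and G="\<lambda>M. precD Z (g M)"])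
     (auto intro: lin_comp[OF lin_emb lin_rpA2] lin_comp[OF lin_g linp2] simp: rpA_single g_single)

lemma U3: "lsA (emb M) X = succD (g M) X"
  by (rule lin_unique[where s=sD and F="\<lambda>M. lsA (emb M) X" and G="\<lambda>M. succD (g M) X"])
     (auto intro: lin_comp[OF lin_emb lin_lsA] lin_comp[OF lin_g lins1] simp: lsA_single g_single)


lemma RP_step:
  assumes IH: "\<And>b'. b = Some b' \<Longrightarrow> g (pr (single b' 1) S) = precD (g (single b' 1)) (g S) \<and>
      g (su (single b' 1) S) = succD (g (single b' 1)) (g S)"
  shows "rpA Z (star (single b 1) (emb S)) = precD (rpA Z (single b 1)) (g S)"
proof (cases b)
  case None then show ?thesis by (simp add: K4a U2 rpA_single)
next
  case (Some b')
  have "rpA Z (star (single b 1) (emb S)) = rpA Z (star (emb (single b' 1)) (emb S))" by (simp add: Some)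
  also have "\<dots> = precD Z (g (mu (single b' 1) S))" by (simp only: K3[symmetric] U2)
  also have "\<dots> = precD Z (precD (g (single b' 1)) (g S) + succD (g (single b' 1)) (g S))"
    using IH[OF Some] by (simp add: lin_add[OF lin_g])
  also have "\<dots> = precD (rpA Z (single b 1)) (g S)" by (simp add: ax1 Some rpA_single g_single)
  finally show ?thesis .
qed

lemma LS_step:
  assumes IH: "\<And>c'. c = Some c' \<Longrightarrow> g (pr T (single c' 1)) = precD (g T) (g (single c' 1)) \<and>
      g (su T (single c' 1)) = succD (g T) (g (single c' 1))"
  shows "lsA (star (emb T) (single c 1)) Y = succD (g T) (lsA (single c 1) Y)"
proof (cases c)
  case None then show ?thesis by (simp add: K4b U3 lsA_single)
next
  case (Some c')
  have "lsA (star (emb T) (single c 1)) Y = lsA (star (emb T) (emb (single c' 1))) Y" by (simp add: Some)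
  also have "\<dots> = succD (g (mu T (single c' 1))) Y" by (simp only: K3[symmetric] U3)
  also have "\<dots> = succD (precD (g T) (g (single c' 1)) + succD (g T) (g (single c' 1))) Y"
    using IH[OF Some] by (simp add: lin_add[OF lin_g])
  also have "\<dots> = succD (g T) (lsA (single c 1) Y)" by (simp add: ax3 Some lsA_single g_single)
  finally show ?thesis .
qed

lemma RPS: "rpA (succD W V) (single d 1) = succD W (rpA V (single d 1))"
  by (cases d) (simp_all add: rpA_single ax2)

lemma morph_basis:
  fixes t s :: "('x \<times> nat) dtree"
  shows "g (pr (single t 1) (single s 1)) = precD (g (single t 1)) (g (single s (1::'k))) \<and>
         g (su (single t 1) (single s 1)) = succD (g (single t 1)) (g (single s (1::'k)))"
proof (induction "size t + size s" arbitrary: t s rule: less_induct)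
  case less
  obtain a x n b where t: "t = Vert a (x,n) b" by (metis dtree.exhaust prod.exhaust)
  obtain c y m d where s: "s = Vert c (y,m) d" by (metis dtree.exhaust prod.exhaust)
  have T: "single t (1::'k) = Gr (single a 1) (x,n) (single b 1)" by (simp add: t Gr_single)
  have S: "single s (1::'k) = Gr (single c 1) (y,m) (single d 1)" by (simp add: s Gr_single)
  have M1: "g (pr (single t 1) (single s 1)) = precD (g (single t 1)) (g (single s (1::'k)))"
  proof -
    have "g (pr (single t 1) (single s 1)) = g (Gr (single a 1) (x,n) (star (single b 1) (emb (single s (1::'k)))))"
      by (simp only: T K1)
    also have "\<dots> = rpA (lsA (single a 1) (XX x n)) (star (single b 1) (emb (single s 1)))" by (rule U1)
    also have "\<dots> = precD (rpA (lsA (single a 1) (XX x n)) (single b 1)) (g (single s 1))"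
    proof (rule RP_step)
      fix b' assume "b = Some b'"
      then have "size b' + size s < size t + size s" using t by simp
      from less[OF this] show "g (pr (single b' 1) (single s 1)) = precD (g (single b' 1)) (g (single s 1)) \<and>
        g (su (single b' 1) (single s 1)) = succD (g (single b' 1)) (g (single s (1::'k))) " .
    qed
    also have "\<dots> = precD (g (single t 1)) (g (single s 1))" by (simp only: T U1)
    finally show ?thesis .
  qed
  have M2: "g (su (single t 1) (single s 1)) = succD (g (single t 1)) (g (single s (1::'k)))"
  proof -
    have "g (su (single t 1) (single s 1)) = g (Gr (star (emb (single t (1::'k))) (single c 1)) (y,m) (single d 1))"
      by (simp only: S K2)
    also have "\<dots> = rpA (lsA (star (emb (single t 1)) (single c 1)) (XX y m)) (single d 1)" by (rule U1)
    also have "\<dots> = rpA (succD (g (single t 1)) (lsA (single c 1) (XX y m))) (single d 1)"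
    proof (subst LS_step)
      fix c' assume "c = Some c'"
      then have "size t + size c' < size t + size s" using s by simp
      from less[OF this] show "g (pr (single t 1) (single c' 1)) = precD (g (single t 1)) (g (single c' 1)) \<and>
        g (su (single t 1) (single c' 1)) = succD (g (single t 1)) (g (single c' (1::'k)))" .
    qed (rule refl)
    also have "\<dots> = succD (g (single t 1)) (rpA (lsA (single c 1) (XX y m)) (single d 1))" by (rule RPS)
    also have "\<dots> = succD (g (single t 1)) (g (single s 1))" by (simp only: S U1)
    finally show ?thesis .
  qed
  show ?case using M1 M2 by blast
qed

lemma DRP:
  assumes "\<And>b'. b = Some b' \<Longrightarrow> dD (g (single b' 1)) = g (dX lam (single b' 1))"
  shows "dD (rpA Z (single b 1)) = rpA (dD Z) (single b 1) + rpA Z (dA lam (single b 1))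
     + sD lam (rpA (dD Z) (dA lam (single b 1)))"
proof (cases b)
  case None then show ?thesis
    by (simp add: rpA_single lin_0[OF lin_rpA2] module.scale_zero_right[OF mD])
next
  case (Some b')
  show ?thesis using assms[OF Some]
    by (simp add: Some rpA_single der1 dA_Some U2 g_single)
qed

lemma DLS:
  assumes "\<And>a'. a = Some a' \<Longrightarrow> dD (g (single a' 1)) = g (dX lam (single a' 1))"
  shows "dD (lsA (single a 1) X) = lsA (dA lam (single a 1)) X + lsA (single a 1) (dD X)
     + sD lam (lsA (dA lam (single a 1)) (dD X))"
proof (cases a)
  case None then show ?thesis
    by (simp add: lsA_single lin_0[OF lin_lsA] module.scale_zero_right[OF mD])
next
  case (Some a')
  show ?thesis using assms[OF Some]
    by (simp add: Some lsA_single der2 dA_Some U3 g_single)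
qed

lemma dcompat: "dD (g (single t (1::'k))) = g (dX lam (single t 1))"
proof (induction t)
  case (Vert a xn b)
  obtain x n where xn: "xn = (x, n)" by (cases xn)
  have T: "single (Vert a xn b) (1::'k) = Gr (single a 1) (x,n) (single b 1)" by (simp add: xn Gr_single)
  have DR: "dD (rpA Z (single b 1)) = rpA (dD Z) (single b 1) + rpA Z (dA lam (single b 1))
     + sD lam (rpA (dD Z) (dA lam (single b (1::'k))))" for Z
    by (rule DRP) (use Vert(2) in auto)
  have DL: "dD (lsA (single a 1) X) = lsA (dA lam (single a 1)) X + lsA (single a 1) (dD X)
     + sD lam (lsA (dA lam (single a (1::'k))) (dD X))" for X
    by (rule DLS) (use Vert(1) in auto)
  show ?case
    unfolding T K6 U1 DR DL
    by (simp add: lin_add[OF lin_g] lin_sc[OF lin_g] U1 lin_add[OF lin_rpA1] lin_sc[OF lin_rpA1]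
        module.scale_right_distrib[OF mD] module.scale_scale[OF mD] add_ac mult_ac)
qed


lemma dX_V: "dX lam (single (Vert None (x,n) None) 1) = single (Vert None (x, Suc n) None) (1::'k)"
proof -
  have "dX lam (single (Vert None (x,n) None) 1) = dX lam (Gr (single None 1) (x,n) (single None (1::'k)))"
    by (simp add: Gr_single)
  also have "\<dots> = Gr (single None 1) (x,Suc n) (single None (1::'k))"
    by (simp only: K6 dA_None lin_simps2 pm_scale_simps add_0_left add_0_right)
  also have "\<dots> = single (Vert None (x, Suc n) None) (1::'k)" by (simp add: Gr_single)
  finally show ?thesis .
qed

lemma uniq:
  assumes h: "module_hom pm_scale sD h" "\<forall>a b. h (pr a b) = precD (h a) (h b)"
    "\<forall>a b. h (su a b) = succD (h a) (h b)" "\<forall>a. dD (h a) = h (dX lam a)" "\<forall>x. h (jX x) = f x"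
  shows "h p = g p"
proof -
  have lh: "lin pm_scale sD h" using h(1) unfolding module_hom_def module_hom_axioms_def lin_def by simp
  have hV: "h (single (Vert None (x,n) None) 1) = XX x n" for x n
  proof (induction n)
    case 0 then show ?case using h(5) by (simp add: jX_def)
  next
    case (Suc n) then show ?case by (simp add: dX_V[symmetric] h(4)[rule_format, symmetric])
  qed
  have ht: "h (single t 1) = GG t" for t
  proof (induction t)
    case (Vert a xn b)
    obtain x n where xn: "xn = (x, n)" by (cases xn)
    have hAV: "h (Gr (single a 1) (x,n) (single None 1)) = (case map_option GG a of None \<Rightarrow> XX x n | Some A \<Rightarrow> succD A (XX x n))"
    proof (cases a)
      case None then show ?thesis using hV by (simp add: Gr_single)
    next
      case (Some a')
      have e1: "Gr (single (Some a') 1) (x,n) (single None 1) = su (single a' 1) (Gr (single None 1) (x,n) (single None (1::'k)))"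
        by (simp only: K2 K4b emb_single)
      have "h (Gr (single a 1) (x,n) (single None 1)) = succD (h (single a' 1)) (h (Gr (single None 1) (x,n) (single None (1::'k))))"
        unfolding Some e1 using h(3) by blast
      then show ?thesis using Vert(1) hV by (simp add: Some Gr_single)
    qed
    show ?case
    proof (cases b)
      case None
      then show ?thesis using hAV by (simp add: xn Gr_single Let_def)
    next
      case (Some b')
      have e2: "Gr (single a 1) (x,n) (single (Some b') 1) = pr (Gr (single a 1) (x,n) (single None 1)) (single b' (1::'k))"
        by (simp only: K1 K4a emb_single)
      have "h (Gr (single a 1) (x,n) (single (Some b') 1)) = precD (h (Gr (single a 1) (x,n) (single None 1))) (h (single b' (1::'k)))"
        unfolding e2 using h(2) by blast
      then show ?thesis using Vert(2) hAV by (simp add: Some xn Let_def Gr_single)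
    qed
  qed
  show ?thesis by (rule lin_unique[OF lh lin_g]) (simp add: ht g_single)
qed

lemma exist:
  "module_hom pm_scale sD g \<and> (\<forall>a b. g (pr a b) = precD (g a) (g b)) \<and> (\<forall>a b. g (su a b) = succD (g a) (g b))
   \<and> (\<forall>a. dD (g a) = g (dX lam a)) \<and> (\<forall>x. g (jX x) = f x)"
proof (intro conjI allI)
  show "module_hom pm_scale sD g" by (rule lin_module_hom[OF module_pm_scale mD lin_g])
  show "g (pr a b) = precD (g a) (g b)" for a b
    by (rule lin_unique2[where s=sD and F="\<lambda>a b. g (pr a b)" and G="\<lambda>a b. precD (g a) (g b)"])
       (auto intro: lin_comp[OF lin_pr1 lin_g] lin_comp[OF lin_pr2 lin_g] lin_comp[OF lin_g linp1]
         lin_comp[OF lin_g linp2] simp del: pr_single su_single simp: morph_basis)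
  show "g (su a b) = succD (g a) (g b)" for a b
    by (rule lin_unique2[where s=sD and F="\<lambda>a b. g (su a b)" and G="\<lambda>a b. succD (g a) (g b)"])
       (auto intro: lin_comp[OF lin_su1 lin_g] lin_comp[OF lin_su2 lin_g] lin_comp[OF lin_g lins1]
         lin_comp[OF lin_g lins2] simp del: pr_single su_single simp: morph_basis)
  show "dD (g a) = g (dX lam a)" for a
    by (rule lin_unique[where s=sD and F="\<lambda>a. dD (g a)" and G="\<lambda>a. g (dX lam a)"])
       (auto intro: lin_comp[OF lin_g lind] lin_comp[OF lin_dX lin_g] simp: dcompat)
  show "g (jX x) = f x" for x by (simp add: jX_def g_single)
qed

end

theorem theorem5p6:
  fixes lam :: "'k::comm_ring_1"
  shows "diff_dendriform_algebra (pm_scale :: 'k \<Rightarrow> ('x, 'k) DD \<Rightarrow> ('x, 'k) DD)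
            DD_prec DD_succ (dX lam) lam
    \<and> (\<forall>(sD :: 'k \<Rightarrow> 'd::ab_group_add \<Rightarrow> 'd) precD succD dD (f :: 'x \<Rightarrow> 'd).
          diff_dendriform_algebra sD precD succD dD lam \<longrightarrow>
          (\<exists>!g :: ('x, 'k) DD \<Rightarrow> 'd.
              module_hom pm_scale sD g
            \<and> (\<forall>a b. g (DD_prec a b) = precD (g a) (g b))
            \<and> (\<forall>a b. g (DD_succ a b) = succD (g a) (g b))
            \<and> (\<forall>a. dD (g a) = g (dX lam a))
            \<and> (\<forall>x. g (jX x) = f x)))"
proof (intro conjI allI impI)
  show "diff_dendriform_algebra (pm_scale :: 'k \<Rightarrow> ('x, 'k) DD \<Rightarrow> ('x, 'k) DD) DD_prec DD_succ (dX lam) lam"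
    by (rule DD_diff)
  fix sD :: "'k \<Rightarrow> 'd::ab_group_add \<Rightarrow> 'd" and precD succD dD and f :: "'x \<Rightarrow> 'd"
  assume "diff_dendriform_algebra sD precD succD dD lam"
  then interpret T: ddtgt sD precD succD dD lam f by unfold_locales
  show "\<exists>!g :: ('x, 'k) DD \<Rightarrow> 'd.
              module_hom pm_scale sD g
            \<and> (\<forall>a b. g (DD_prec a b) = precD (g a) (g b))
            \<and> (\<forall>a b. g (DD_succ a b) = succD (g a) (g b))
            \<and> (\<forall>a. dD (g a) = g (dX lam a))
            \<and> (\<forall>x. g (jX x) = f x)"
  proof (rule ex1I[where a=T.g])
    show "module_hom pm_scale sD T.g \<and> (\<forall>a b. T.g (DD_prec a b) = precD (T.g a) (T.g b))
      \<and> (\<forall>a b. T.g (DD_succ a b) = succD (T.g a) (T.g b)) \<and> (\<forall>a. dD (T.g a) = T.g (dX lam a))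
      \<and> (\<forall>x. T.g (jX x) = f x)" by (rule T.exist)
    fix h :: "('x, 'k) DD \<Rightarrow> 'd"
    assume "module_hom pm_scale sD h \<and> (\<forall>a b. h (DD_prec a b) = precD (h a) (h b))
      \<and> (\<forall>a b. h (DD_succ a b) = succD (h a) (h b)) \<and> (\<forall>a. dD (h a) = h (dX lam a))
      \<and> (\<forall>x. h (jX x) = f x)"
    then show "h = T.g" using T.uniq by blast
  qed
qed

end
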